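(* Let $n,r$ be integers with $0\le r\le n$, $c$ an integer, and $A$ a function on $\mathbb{Z}^n$. Assume there are functions $B_j(x,y)$ on $\mathbb{Z}^2$ and $A'_j(k_1,\ldots,k_{n-2})$ on $\mathbb{Z}^{n-2}$, $1\le j\le m$, such that $$D_iA(k_1,\ldots,k_n)=\sum_{j=1}^mB_j(k_i+i,k_{i+1}+i)\,A'_j(k_1,\ldots,k_{i-1},k_{i+2}+2,\ldots,k_n+2)$$ for all $i$ with $1\le i\le n-1$. Then for every $i$ with $1\le i\le n-r-1$, \begin{multline*} D_{i} G_q(r,n,c,A)(k_{1},\ldots,k_{n-r}) = \sum_{j=1}^{m} \frac{(-1)^{r}}{2^{r}} q^{r(-2 n +r + 1)} \, D(r,B_{j})(k_{i}+i,k_{i+1}+i) \\ \times G_q(r,n-2,c+2,A'_{j})(k_{1},\ldots,k_{i-1},k_{i+2}+2,\ldots,k_{n-r}+2). \end{multline*}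
   Context: $q$ is an indeterminate. Sums use the convention: $\sum_{i=a}^bf(i)=f(a)+\cdots+f(b)$ if $a\le b$, $0$ if $b=a-1$, and $-f(b+1)-\cdots-f(a-1)$ if $b+1\le a-1$. For a function $H$ of $N$ integer variables and $1\le j\le N-1$, $D_jH(k_1,\ldots,k_N)=H(k_1,\ldots,k_N)+H(k_1,\ldots,k_{j-1},k_{j+1}+1,k_j-1,k_{j+2},\ldots,k_N)$. For integers $0\le r\le n$, an integer $c$ and a function $A$ on $\mathbb{Z}^n$, define $G_q(r,n,c,A)$ (a function of $n-r$ integer variables) recursively: $G_q(0,n,c,A)=A$ and $$G_q(r,n,c,A)(k_1,\ldots,k_{n-r})=\sum_{l_1=0}^{k_1}\sum_{l_2=k_1}^{k_2}\cdots\sum_{l_{n-r}=k_{n-r-1}}^{k_{n-r}}\sum_{l_{n-r+1}=k_{n-r}}^{c}G_q(r-1,n,c,A)(l_1,\ldots,l_{n-r+1})\,q^{l_1+\cdots+l_{n-r+1}}.$$ For a function $B(x,y)$ and $r\ge0$, define $D(0,B)=B$ and $D(r,B)(x,y)=\sum_{x'=x+1}^{y+1}\sum_{y'=x}^{y}D(r-1,B)(x',y')\,q^{x'+y'}$. *)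

theory Defs
  imports Main
begin

definition gsum :: "(int \<Rightarrow> 'a::ab_group_add) \<Rightarrow> int \<Rightarrow> int \<Rightarrow> 'a" where
  "gsum f a b = (if a \<le> b then sum f {a..b}
                 else if b = a - 1 then 0 else - sum f {b+1..a-1})"

text \<open>Nested sum: for bounds list b0,b1,...,bm, sums over l1 from b0 to b1, l2 from b1 to b2, ...,
  lm from b(m-1) to bm, of f [l1,...,lm].\<close>
fun nsum :: "(int list \<Rightarrow> 'a::ab_group_add) \<Rightarrow> int list \<Rightarrow> 'a" where
  "nsum f (a # b # rest) = gsum (\<lambda>l. nsum (\<lambda>ls. f (l # ls)) (b # rest)) a b"
| "nsum f _ = f []"

text \<open>The operator D_j (1-indexed j) on functions of integer vectors (lists).\<close>
definition Dop :: "nat \<Rightarrow> (int list \<Rightarrow> 'a::plus) \<Rightarrow> int list \<Rightarrow> 'a" where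
  "Dop j H ks = H ks + H (take (j - 1) ks @ [ks ! j + 1, ks ! (j - 1) - 1] @ drop (j + 1) ks)"

text \<open>G_q(r,n,c,A); evaluated at lists of length n - r.\<close>
fun Gq :: "'a::field \<Rightarrow> nat \<Rightarrow> nat \<Rightarrow> int \<Rightarrow> (int list \<Rightarrow> 'a) \<Rightarrow> int list \<Rightarrow> 'a" where
  "Gq q 0 n c A = A"
| "Gq q (Suc r) n c A = (\<lambda>ks. nsum (\<lambda>ls. Gq q r n c A ls * q powi (sum_list ls)) (0 # ks @ [c]))"

fun Dr :: "'a::field \<Rightarrow> nat \<Rightarrow> (int \<Rightarrow> int \<Rightarrow> 'a) \<Rightarrow> int \<Rightarrow> int \<Rightarrow> 'a" where
  "Dr q 0 B = B"
| "Dr q (Suc r) B = (\<lambda>x y. gsum (\<lambda>x'. gsum (\<lambda>y'. Dr q r B x' y' * q powi (x' + y')) x y) (x + 1) (y + 1))"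

end

theory Submission
  imports Defs
begin
lemma gsum_alt: "gsum f a b = sum f {a..b} - sum f {b+1..a-1}"
  unfolding gsum_def by auto

lemma gsum_step: "gsum f a (b+1) = gsum f a b + f (b+1)"
proof (cases "a \<le> b + 1")
  case True
  then have "{a..b+1} = insert (b+1) {a..b}" by auto
  moreover have "{b+1+1..a-1} = {}" "{b+1..a-1} = {}" using True by auto
  ultimately show ?thesis unfolding gsum_alt by (simp add: add.commute)
next
  case False
  then have "{b+1..a-1} = insert (b+1) {b+1+1..a-1}" by auto
  moreover have "{a..b+1} = {}" "{a..b} = {}" using False by auto
  ultimately show ?thesis unfolding gsum_alt by simp
qed

lemma gsum_empty[simp]: "gsum f a (a - 1) = 0"
  unfolding gsum_def by simp

lemma gsum_split: "gsum f a b + gsum f (b+1) c = gsum f a c"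
proof (induction c rule: int_induct[where k=b])
  case base
  then show ?case by (simp add: gsum_def)
next
  case (step1 i)
  then show ?case by (simp add: gsum_step add.assoc)
next
  case (step2 i)
  have "gsum f a i = gsum f a (i - 1) + f i" "gsum f (b+1) i = gsum f (b+1) (i - 1) + f i"
    using gsum_step[of f a "i-1"] gsum_step[of f "b+1" "i-1"] by simp_all
  with step2 show ?case by (simp add: algebra_simps)
qed

lemma gsum_rev: "gsum f (b+1) (a-1) = - gsum f a b"
  using gsum_split[of f a b "a-1"] by (simp add: eq_neg_iff_add_eq_0 add.commute)

lemma gsum_add: "gsum (\<lambda>x. f x + g x) a b = gsum f a b + gsum g a b"
  unfolding gsum_alt by (simp add: sum.distrib)

lemma gsum_diff: "gsum (\<lambda>x. f x - g x) a b = gsum f a b - gsum g a b"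
  unfolding gsum_alt by (simp add: sum_subtractf)

lemma gsum_neg: "gsum (\<lambda>x. - f x) a b = - gsum f a b"
  unfolding gsum_alt by (simp add: sum_negf)

lemma gsum_cmult: "gsum (\<lambda>x. c * f x) a b = (c::'a::comm_ring) * gsum f a b"
  unfolding gsum_alt by (simp add: sum_distrib_left right_diff_distrib)

lemma gsum_multc: "gsum (\<lambda>x. f x * c) a b = gsum f a b * (c::'a::comm_ring)"
  unfolding gsum_alt by (simp add: sum_distrib_right left_diff_distrib)

lemma gsum_sum: "gsum (\<lambda>x. \<Sum>j\<in>J. f j x) a b = (\<Sum>j\<in>J. gsum (f j) a b)"
  unfolding gsum_alt by (simp add: sum.swap[of _ J] sum_subtractf)

lemma gsum_swap: "gsum (\<lambda>x. gsum (\<lambda>y. f x y) c d) a b = gsum (\<lambda>y. gsum (\<lambda>x. f x y) a b) c d"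
proof -
  have e: "\<And>A C. (\<Sum>x\<in>A. \<Sum>y\<in>C. f x y) = (\<Sum>y\<in>C. \<Sum>x\<in>A. f x y)"
    by (rule sum.swap)
  show ?thesis unfolding gsum_alt sum_subtractf by (simp add: e)
qed

lemma gsum_shift: "gsum f (a+k) (b+k) = gsum (\<lambda>x. f (x+k)) a b"
proof (induction b rule: int_induct[where k="a-1"])
  case base
  then show ?case by (simp add: gsum_def)
next
  case (step1 i)
  then show ?case using gsum_step[of f "a+k" "i+k"] gsum_step[of "\<lambda>x. f (x+k)" a i]
    by (simp add: algebra_simps)
next
  case (step2 i)
  then show ?case using gsum_step[of f "a+k" "i-1+k"] gsum_step[of "\<lambda>x. f (x+k)" a "i-1"]
    by (simp add: algebra_simps)
qed

lemma gsum_sym: "gsum (\<lambda>X. gsum (\<lambda>Y. H X Y) (a-1) (b-1)) a b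
   = gsum (\<lambda>X. gsum (\<lambda>Y. H (Y+1) (X-1)) (a-1) (b-1)) a b"
proof -
  have "gsum (\<lambda>X. gsum (\<lambda>Y. H (Y+1) (X-1)) (a-1) (b-1)) a b
      = gsum (\<lambda>X. gsum (\<lambda>Y. H (Y+1) X) (a-1) (b-1)) (a-1) (b-1)"
    using gsum_shift[of "\<lambda>X. gsum (\<lambda>Y. H (Y+1) (X-1)) (a-1) (b-1)" "a-1" 1 "b-1"] by simp
  also have "\<dots> = gsum (\<lambda>X. gsum (\<lambda>Y. H Y X) a b) (a-1) (b-1)"
    using gsum_shift[of "\<lambda>Y. H Y _" "a-1" 1 "b-1"] by simp
  also have "\<dots> = gsum (\<lambda>X. gsum (\<lambda>Y. H X Y) (a-1) (b-1)) a b"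
    by (rule gsum_swap)
  finally show ?thesis ..
qed


lemma nsum_append:
  "pre \<noteq> [] \<Longrightarrow> nsum f (pre @ ys) = nsum (\<lambda>l1. nsum (\<lambda>l2. f (l1 @ l2)) (last pre # ys)) pre"
proof (induction pre arbitrary: f rule: induct_list012)
  case 1
  then show ?case by simp
next
  case (2 x)
  then show ?case by simp
next
  case (3 x y zs)
  show ?case using 3(2)[of "\<lambda>ls. f (_ # ls)"] by simp
qed

lemma nsum_add: "nsum (\<lambda>ls. f ls + g ls) bs = nsum f bs + nsum g bs"
  by (induction bs arbitrary: f g rule: induct_list012) (simp_all add: gsum_add)

lemma nsum_cmult: "nsum (\<lambda>ls. c * f ls) bs = (c::'a::comm_ring) * nsum f bs"
  by (induction f bs rule: nsum.induct) (simp_all add: gsum_cmult)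

lemma nsum_sum: "nsum (\<lambda>ls. \<Sum>j\<in>J. f j ls) bs = (\<Sum>j\<in>J. nsum (f j) bs)"
  by (induction "\<lambda>ls. \<Sum>j\<in>J. f j ls" bs arbitrary: f rule: nsum.induct) (simp_all add: gsum_sum)

lemma nsum_cong_len:
  "(\<And>ls. length ls = length bs - 1 \<Longrightarrow> f ls = g ls) \<Longrightarrow> nsum f bs = nsum g bs"
proof (induction f bs arbitrary: g rule: nsum.induct)
  case (1 f a b rest)
  have "\<And>l. nsum (\<lambda>ls. f (l # ls)) (b # rest) = nsum (\<lambda>ls. g (l # ls)) (b # rest)"
    using 1 by simp
  then show ?case by simp
next
  case ("2_1" f)
  then show ?case by simp
next
  case ("2_2" f v)
  then show ?case by simp
qed

lemma nsum_shift2: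
  "nsum f (map (\<lambda>k. k + 2) bs) = nsum (\<lambda>ls. f (map (\<lambda>k. k + 2) ls)) bs"
proof (induction f bs rule: nsum.induct)
  case (1 f a b rest)
  have "nsum f (map (\<lambda>k. k + 2) (a # b # rest))
     = gsum (\<lambda>l. nsum (\<lambda>ls. f (l # map (\<lambda>k. k + 2) ls)) (b # rest)) (a+2) (b+2)"
    using 1 by simp
  also have "\<dots> = gsum (\<lambda>l. nsum (\<lambda>ls. f ((l+2) # map (\<lambda>k. k + 2) ls)) (b # rest)) a b"
    by (rule gsum_shift)
  finally show ?case by simp
qed simp_all

lemma sum_list_map2: "sum_list (map (\<lambda>k. k + (2::int)) l) = sum_list l + 2 * int (length l)"
  by (induction l) auto


lemma half_sym: fixes T U V :: "'a::field_char_0"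
  assumes "T = U" "T = V" shows "T = (U + V) / 2"
  using assms by simp

lemma core:
  fixes h :: "int \<Rightarrow> int \<Rightarrow> int \<Rightarrow> 'a::field_char_0" and E :: "nat \<Rightarrow> int \<Rightarrow> int \<Rightarrow> 'a"
    and K :: "nat \<Rightarrow> int \<Rightarrow> 'a"
  assumes hX: "\<And>X Y Z. h X Y Z + h (Y+1) (X-1) Z = C * (\<Sum>j\<in>J. E j X Y * K j (Z+2))"
    and hY: "\<And>X Y Z. h X Y Z + h X (Z+1) (Y-1) = C * (\<Sum>j\<in>J. E j (Y+1) (Z+1) * K j X)"
  shows "gsum (\<lambda>X. gsum (\<lambda>Y. gsum (\<lambda>Z. h X Y Z) b s) a b) p a
       + gsum (\<lambda>X. gsum (\<lambda>Y. gsum (\<lambda>Z. h X Y Z) (a-1) s) (b+1) (a-1)) p (b+1)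
     = - (C/2) * (\<Sum>j\<in>J. gsum (\<lambda>X. gsum (\<lambda>Y. E j X Y) a b) (a+1) (b+1) * gsum (K j) p (s+2))"
proof -
  define DD where "DD j = gsum (\<lambda>X. gsum (\<lambda>Y. E j X Y) a b) (a+1) (b+1)" for j
  define S1 where "S1 = gsum (\<lambda>X. gsum (\<lambda>Y. gsum (\<lambda>Z. h X Y Z) b s) a b) p a"
  define T1 where "T1 = gsum (\<lambda>X. gsum (\<lambda>Y. gsum (\<lambda>Z. h X Y Z) (a-1) (b-1)) a b) p a"
  define T23 where "T23 = gsum (\<lambda>X. gsum (\<lambda>Y. gsum (\<lambda>Z. h X Y Z) (a-1) s) a b) (a+1) (b+1)"
  have r: "\<And>X Y. gsum (\<lambda>Z. h X Y Z) (a-1) s = gsum (\<lambda>Z. h X Y Z) (a-1) (b-1) + gsum (\<lambda>Z. h X Y Z) b s"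
    by (metis gsum_split diff_add_cancel)
  have inner: "\<And>X. gsum (\<lambda>Y. gsum (\<lambda>Z. h X Y Z) (a-1) s) (b+1) (a-1)
       = - gsum (\<lambda>Y. gsum (\<lambda>Z. h X Y Z) (a-1) s) a b"
    by (rule gsum_rev)
  have outer: "\<And>g. gsum g p (b+1) = gsum g p a + gsum g (a+1) (b+1)"
    using gsum_split by metis
  have step1: "gsum (\<lambda>X. gsum (\<lambda>Y. gsum (\<lambda>Z. h X Y Z) (a-1) s) (b+1) (a-1)) p (b+1)
      = - (S1 + T1 + T23)"
    unfolding outer inner by (simp add: S1_def T1_def T23_def r gsum_neg gsum_add gsum_diff)
  have shE: "\<And>j. gsum (\<lambda>Y. gsum (\<lambda>Z. E j (Y+1) (Z+1)) (a-1) (b-1)) a b = DD j"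
  proof -
    fix j
    have "\<And>Y. gsum (\<lambda>Z. E j (Y+1) (Z+1)) (a-1) (b-1) = gsum (\<lambda>Z. E j (Y+1) Z) a b"
      using gsum_shift[of "E j _" "a-1" 1 "b-1"] by simp
    moreover have "gsum (\<lambda>Y. gsum (\<lambda>Z. E j (Y+1) Z) a b) a b = DD j"
      unfolding DD_def using gsum_shift[of "\<lambda>Y. gsum (\<lambda>Z. E j Y Z) a b" a 1 b] by simp
    ultimately show "gsum (\<lambda>Y. gsum (\<lambda>Z. E j (Y+1) (Z+1)) (a-1) (b-1)) a b = DD j" by simp
  qed
  have T1': "T1 = C / 2 * (\<Sum>j\<in>J. DD j * gsum (K j) p a)"
  proof -
    have "\<And>X. gsum (\<lambda>Y. gsum (\<lambda>Z. h X Y Z) (a-1) (b-1)) a b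
        = (gsum (\<lambda>Y. gsum (\<lambda>Z. h X Y Z) (a-1) (b-1)) a b
           + gsum (\<lambda>Y. gsum (\<lambda>Z. h X (Z+1) (Y-1)) (a-1) (b-1)) a b) / 2"
      by (rule half_sym[OF refl gsum_sym])
    also have "\<And>X. (gsum (\<lambda>Y. gsum (\<lambda>Z. h X Y Z) (a-1) (b-1)) a b
           + gsum (\<lambda>Y. gsum (\<lambda>Z. h X (Z+1) (Y-1)) (a-1) (b-1)) a b) / 2
        = C / 2 * (\<Sum>j\<in>J. K j X * DD j)"
      by (simp add: gsum_add[symmetric] hY gsum_cmult gsum_sum gsum_multc shE[symmetric] mult.commute)
    finally have "\<And>X. gsum (\<lambda>Y. gsum (\<lambda>Z. h X Y Z) (a-1) (b-1)) a b = C / 2 * (\<Sum>j\<in>J. K j X * DD j)" .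
    then have "T1 = gsum (\<lambda>X. C / 2 * (\<Sum>j\<in>J. K j X * DD j)) p a"
      unfolding T1_def by (simp only:)
    also have "\<dots> = C / 2 * (\<Sum>j\<in>J. gsum (K j) p a * DD j)"
      by (simp only: gsum_cmult gsum_sum gsum_multc)
    finally show ?thesis by (simp add: mult.commute)
  qed
  have T23': "T23 = C / 2 * (\<Sum>j\<in>J. DD j * gsum (K j) (a+1) (s+2))"
  proof -
    define H where "H X Y = gsum (\<lambda>Z. h X Y Z) (a-1) s" for X Y
    have shK: "\<And>j. gsum (\<lambda>Z. K j (Z+2)) (a-1) s = gsum (K j) (a+1) (s+2)"
      using gsum_shift[of "K _" "a-1" 2 s] by (simp add: add.commute)
    have "T23 = gsum (\<lambda>X. gsum (\<lambda>Y. H X Y) (a+1-1) (b+1-1)) (a+1) (b+1)"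
      unfolding T23_def H_def by simp
    also have "\<dots> = (gsum (\<lambda>X. gsum (\<lambda>Y. H X Y) (a+1-1) (b+1-1)) (a+1) (b+1)
       + gsum (\<lambda>X. gsum (\<lambda>Y. H (Y+1) (X-1)) (a+1-1) (b+1-1)) (a+1) (b+1)) / 2"
      by (rule half_sym[OF refl gsum_sym])
    also have "\<dots> = C / 2 * (\<Sum>j\<in>J. DD j * gsum (K j) (a+1) (s+2))"
      by (simp add: H_def gsum_add[symmetric] hX gsum_cmult gsum_sum gsum_multc shK DD_def)
    finally show ?thesis .
  qed
  have fin: "\<And>j. gsum (K j) p a + gsum (K j) (a+1) (s+2) = gsum (K j) p (s+2)"
    by (rule gsum_split)
  show ?thesis
    unfolding step1 S1_def[symmetric] T1' T23' DD_def[symmetric]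
    by (simp add: fin[symmetric] distrib_left sum.distrib algebra_simps)
qed

lemma powi3: "(q::'a::field) \<noteq> 0 \<Longrightarrow> e = e1 + e2 + e3 \<Longrightarrow> q powi e = q powi e1 * q powi e2 * q powi e3"
  by (simp add: power_int_add)

lemma ks_dec: "Suc i' < length ks \<Longrightarrow> ks = take i' ks @ ks ! i' # ks ! Suc i' # drop (Suc (Suc i')) ks"
  by (metis Cons_nth_drop_Suc Suc_lessD append_take_drop_id)

lemma main:
  fixes q :: "'a::field_char_0" and n m :: nat and c :: int
    and A :: "int list \<Rightarrow> 'a"
    and B :: "nat \<Rightarrow> int \<Rightarrow> int \<Rightarrow> 'a"
    and A' :: "nat \<Rightarrow> int list \<Rightarrow> 'a"
  assumes q_nz: "q \<noteq> 0"
    and hyp: "\<And>i ks. 1 \<le> i \<Longrightarrow> i \<le> n - 1 \<Longrightarrow> length ks = n \<Longrightarrow>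
       Dop i A ks = (\<Sum>j = 1..m. B j (ks ! (i - 1) + int i) (ks ! i + int i)
                       * A' j (take (i - 1) ks @ map (\<lambda>k. k + 2) (drop (i + 1) ks)))"
  shows "r \<le> n \<Longrightarrow> \<forall>i ks. 1 \<le> i \<and> i \<le> n - r - 1 \<and> length ks = n - r \<longrightarrow>
       Dop i (Gq q r n c A) ks =
         (\<Sum>j = 1..m. ((-1) ^ r / 2 ^ r) * q powi (int r * (- 2 * int n + int r + 1))
            * Dr q r (B j) (ks ! (i - 1) + int i) (ks ! i + int i)
            * Gq q r (n - 2) (c + 2) (A' j) (take (i - 1) ks @ map (\<lambda>k. k + 2) (drop (i + 1) ks)))"
proof (induction r)
  case 0
  then show ?case using hyp by simp
next
  case (Suc r)
  have IH: "\<And>i ks. 1 \<le> i \<Longrightarrow> i \<le> n - r - 1 \<Longrightarrow> length ks = n - r \<Longrightarrow>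
       Dop i (Gq q r n c A) ks =
         (\<Sum>j = 1..m. ((-1) ^ r / 2 ^ r) * q powi (int r * (- 2 * int n + int r + 1))
            * Dr q r (B j) (ks ! (i - 1) + int i) (ks ! i + int i)
            * Gq q r (n - 2) (c + 2) (A' j) (take (i - 1) ks @ map (\<lambda>k. k + 2) (drop (i + 1) ks)))"
    using Suc by auto
  show ?case
  proof (intro allI impI)
    fix i :: nat and ks :: "int list" assume H: "1 \<le> i \<and> i \<le> n - Suc r - 1 \<and> length ks = n - Suc r"
    define N where "N = n - Suc r"
    obtain i' where ii: "i = Suc i'" using H by (cases i) auto
    have lenks: "length ks = N" using H N_def by simp
    have iN: "i < N" using H N_def ii by auto
    define \<alpha> where "\<alpha> = ((-1) ^ r / 2 ^ r) * q powi (int r * (- 2 * int n + int r + 1))"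
    define \<alpha>' where "\<alpha>' = ((-1) ^ Suc r / 2 ^ Suc r) * q powi (int (Suc r) * (- 2 * int n + int (Suc r) + 1))"
    define G where "G = Gq q r n c A"
    define F where "F = (\<lambda>ls. G ls * q powi sum_list ls)"
    define F' where "F' = (\<lambda>j ls. Gq q r (n-2) (c+2) (A' j) ls * q powi sum_list ls)"
    define a where "a = ks ! i'"
    define b where "b = ks ! i"
    define pre where "pre = 0 # take i' ks"
    define p where "p = last pre"
    define s where "s = hd (drop (i+1) ks @ [c])"
    define V where "V = tl (drop (i+1) ks @ [c])"
    have post: "drop (i+1) ks @ [c] = s # V" by (simp add: s_def V_def)
    have lenV: "length V = N - i - 1" unfolding V_def using lenks iN by simp
    have prene: "pre \<noteq> []" "length pre = i" using pre_def lenks iN ii by auto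
    define C where "C = \<alpha> * q powi (- 2 * int N)"
    define E where "E j X Y = Dr q r (B j) (X + int i) (Y + int i) * q powi (X + int i + (Y + int i))" for j X Y
    define h where "h l1 X Y Z = nsum (\<lambda>l3. F (l1 @ X # Y # Z # l3)) (s # V)" for l1 X Y Z
    define Kf where "Kf l1 j W = nsum (\<lambda>l3. F' j (l1 @ W # map (\<lambda>k. k+2) l3)) (s # V)" for l1 j W
    have ksd: "ks = take i' ks @ a # b # drop (i+1) ks"
      using ks_dec[of i' ks] iN lenks ii a_def b_def by simp
    have LHS1: "Gq q (Suc r) n c A ks = nsum (\<lambda>l1. gsum (\<lambda>X. gsum (\<lambda>Y. gsum (\<lambda>Z. h l1 X Y Z) b s) a b) p a) pre"
    proof -
      have "0 # ks @ [c] = pre @ a # b # s # V"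
        using ksd post pre_def by (metis append.assoc append_Cons append_Nil)
      then have "Gq q (Suc r) n c A ks = nsum F (pre @ a # b # s # V)"
        by (simp add: F_def G_def)
      also have "\<dots> = nsum (\<lambda>l1. nsum (\<lambda>l2. F (l1 @ l2)) (p # a # b # s # V)) pre"
        by (subst nsum_append[OF prene(1)]) (simp add: p_def)
      finally show ?thesis by (simp add: h_def)
    qed
    have LHS2: "Gq q (Suc r) n c A (take (i - 1) ks @ [ks ! i + 1, ks ! (i - 1) - 1] @ drop (i + 1) ks)
       = nsum (\<lambda>l1. gsum (\<lambda>X. gsum (\<lambda>Y. gsum (\<lambda>Z. h l1 X Y Z) (a-1) s) (b+1) (a-1)) p (b+1)) pre"
    proof -
      have "0 # (take (i - 1) ks @ [ks ! i + 1, ks ! (i - 1) - 1] @ drop (i + 1) ks) @ [c] = pre @ (b+1) # (a-1) # s # V"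
        using post pre_def ii a_def b_def by simp
      then have "Gq q (Suc r) n c A (take (i - 1) ks @ [ks ! i + 1, ks ! (i - 1) - 1] @ drop (i + 1) ks)
          = nsum F (pre @ (b+1) # (a-1) # s # V)"
        by (simp add: F_def G_def)
      also have "\<dots> = nsum (\<lambda>l1. nsum (\<lambda>l2. F (l1 @ l2)) (p # (b+1) # (a-1) # s # V)) pre"
        by (subst nsum_append[OF prene(1)]) (simp add: p_def)
      finally show ?thesis by (simp add: h_def)
    qed
    have RHS1: "Gq q (Suc r) (n-2) (c+2) (A' j) (take (i - 1) ks @ map (\<lambda>k. k + 2) (drop (i + 1) ks))
        = nsum (\<lambda>l1. gsum (Kf l1 j) p (s+2)) pre" for j
    proof -
      have "0 # (take (i - 1) ks @ map (\<lambda>k. k + 2) (drop (i + 1) ks)) @ [c+2] = pre @ (s+2) # map (\<lambda>k. k + 2) V"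
        using arg_cong[OF post, of "map (\<lambda>k. k + 2)"] pre_def ii by simp
      then have "Gq q (Suc r) (n-2) (c+2) (A' j) (take (i - 1) ks @ map (\<lambda>k. k + 2) (drop (i + 1) ks))
          = nsum (F' j) (pre @ (s+2) # map (\<lambda>k. k + 2) V)"
        by (simp add: F'_def)
      also have "\<dots> = nsum (\<lambda>l1. nsum (\<lambda>l2. F' j (l1 @ l2)) (p # (s+2) # map (\<lambda>k. k + 2) V)) pre"
        by (subst nsum_append[OF prene(1)]) (simp add: p_def)
      also have "\<dots> = nsum (\<lambda>l1. gsum (Kf l1 j) p (s+2)) pre"
      proof -
        have "nsum (\<lambda>ls. F' j (l1 @ W # ls)) ((s+2) # map (\<lambda>k. k + 2) V) = Kf l1 j W" for l1 W
          using nsum_shift2[of "\<lambda>ls. F' j (l1 @ W # ls)" "s # V"] by (simp add: Kf_def)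
        then show ?thesis by simp
      qed
      finally show ?thesis .
    qed
    have RHS2: "Dr q (Suc r) (B j) (a + int i) (b + int i) = gsum (\<lambda>X. gsum (\<lambda>Y. E j X Y) a b) (a+1) (b+1)" for j
    proof -
      have inn: "gsum (\<lambda>y'. Dr q r (B j) x y' * q powi (x + y')) (a + int i) (b + int i)
          = gsum (\<lambda>Y. Dr q r (B j) x (Y + int i) * q powi (x + (Y + int i))) a b" for x
        by (rule gsum_shift)
      have out: "gsum g (a + int i + 1) (b + int i + 1) = gsum (\<lambda>X. g (X + int i)) (a+1) (b+1)" for g
        using gsum_shift[of g "a+1" "int i" "b+1"] by (simp add: ac_simps)
      show ?thesis by (simp add: inn out E_def)
    qed
    have intN: "int N = int n - int r - 1" using Suc.prems N_def by simp
    have ptX: "F (l1 @ X # Y # Z # l3) + F (l1 @ (Y+1) # (X-1) # Z # l3)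
        = C * (\<Sum>j=1..m. E j X Y * F' j (l1 @ (Z+2) # map (\<lambda>k. k+2) l3))"
      if l1: "length l1 = i'" and l3: "length l3 = length V" for l1 X Y Z l3
    proof -
      define ks0 where "ks0 = l1 @ X # Y # Z # l3"
      have len0: "length ks0 = n - r" using l1 l3 lenV iN ii ks0_def N_def Suc.prems by simp
      have D: "Dop i G ks0 = G ks0 + G (l1 @ (Y+1) # (X-1) # Z # l3)"
        unfolding Dop_def ks0_def using l1 ii by (simp add: nth_append)
      have IHi: "Dop i G ks0 = (\<Sum>j=1..m. \<alpha> * Dr q r (B j) (X + int i) (Y + int i)
             * Gq q r (n-2) (c+2) (A' j) (l1 @ (Z+2) # map (\<lambda>k. k+2) l3))"
        using IH[of i ks0] H len0 l1 ii unfolding G_def \<alpha>_def ks0_def by (simp add: nth_append)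
      have l3i: "int (length l3) = int N - int i - 1" using l3 lenV iN by simp
      have pw: "q powi sum_list ks0 = q powi (-2 * int N) * q powi (X + int i + (Y + int i))
           * q powi (sum_list (l1 @ (Z+2) # map (\<lambda>k. k+2) l3))"
        by (rule powi3[OF q_nz]) (simp add: ks0_def sum_list_map2 l3i)
      have "F (l1 @ X # Y # Z # l3) + F (l1 @ (Y+1) # (X-1) # Z # l3) = q powi sum_list ks0 * Dop i G ks0"
        using D by (simp add: F_def ks0_def algebra_simps)
      also have "\<dots> = C * (\<Sum>j=1..m. E j X Y * F' j (l1 @ (Z+2) # map (\<lambda>k. k+2) l3))"
        unfolding IHi pw C_def E_def F'_def by (simp add: sum_distrib_left mult_ac)
      finally show ?thesis .
    qed
    have ptY: "F (l1 @ X # Y # Z # l3) + F (l1 @ X # (Z+1) # (Y-1) # l3)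
        = C * (\<Sum>j=1..m. E j (Y+1) (Z+1) * F' j (l1 @ X # map (\<lambda>k. k+2) l3))"
      if l1: "length l1 = i'" and l3: "length l3 = length V" for l1 X Y Z l3
    proof -
      define ks0 where "ks0 = l1 @ X # Y # Z # l3"
      have len0: "length ks0 = n - r" using l1 l3 lenV iN ii ks0_def N_def Suc.prems by simp
      have D: "Dop (Suc i) G ks0 = G ks0 + G (l1 @ X # (Z+1) # (Y-1) # l3)"
        unfolding Dop_def ks0_def using l1 ii by (simp add: nth_append)
      have IHi: "Dop (Suc i) G ks0 = (\<Sum>j=1..m. \<alpha> * Dr q r (B j) (Y + int (Suc i)) (Z + int (Suc i))
             * Gq q r (n-2) (c+2) (A' j) (l1 @ X # map (\<lambda>k. k+2) l3))"
        using IH[of "Suc i" ks0] H len0 l1 ii unfolding G_def \<alpha>_def ks0_def by (simp add: nth_append)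
      have l3i: "int (length l3) = int N - int i - 1" using l3 lenV iN by simp
      have Ee: "E j (Y+1) (Z+1) = Dr q r (B j) (Y + int (Suc i)) (Z + int (Suc i)) * q powi (Y + int (Suc i) + (Z + int (Suc i)))" for j
        unfolding E_def by (simp add: ac_simps)
      have pw: "q powi sum_list ks0 = q powi (-2 * int N) * q powi (Y + int (Suc i) + (Z + int (Suc i)))
           * q powi (sum_list (l1 @ X # map (\<lambda>k. k+2) l3))"
        by (rule powi3[OF q_nz]) (simp add: ks0_def sum_list_map2 l3i)
      have "F (l1 @ X # Y # Z # l3) + F (l1 @ X # (Z+1) # (Y-1) # l3) = q powi sum_list ks0 * Dop (Suc i) G ks0"
        using D by (simp add: F_def ks0_def algebra_simps)
      also have "\<dots> = C * (\<Sum>j=1..m. E j (Y+1) (Z+1) * F' j (l1 @ X # map (\<lambda>k. k+2) l3))"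
        unfolding IHi pw C_def Ee F'_def by (simp add: sum_distrib_left mult_ac)
      finally show ?thesis .
    qed
    have hX: "h l1 X Y Z + h l1 (Y+1) (X-1) Z = C * (\<Sum>j\<in>{1..m}. E j X Y * Kf l1 j (Z+2))"
      if l1: "length l1 = i'" for l1 X Y Z
    proof -
      have "h l1 X Y Z + h l1 (Y+1) (X-1) Z
          = nsum (\<lambda>l3. F (l1 @ X # Y # Z # l3) + F (l1 @ (Y+1) # (X-1) # Z # l3)) (s # V)"
        by (simp add: h_def nsum_add)
      also have "\<dots> = nsum (\<lambda>l3. C * (\<Sum>j=1..m. E j X Y * F' j (l1 @ (Z+2) # map (\<lambda>k. k+2) l3))) (s # V)"
        by (rule nsum_cong_len) (simp add: ptX l1)
      also have "\<dots> = C * (\<Sum>j\<in>{1..m}. E j X Y * Kf l1 j (Z+2))"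
        by (simp add: nsum_cmult nsum_sum Kf_def)
      finally show ?thesis .
    qed
    have hY: "h l1 X Y Z + h l1 X (Z+1) (Y-1) = C * (\<Sum>j\<in>{1..m}. E j (Y+1) (Z+1) * Kf l1 j X)"
      if l1: "length l1 = i'" for l1 X Y Z
    proof -
      have "h l1 X Y Z + h l1 X (Z+1) (Y-1)
          = nsum (\<lambda>l3. F (l1 @ X # Y # Z # l3) + F (l1 @ X # (Z+1) # (Y-1) # l3)) (s # V)"
        by (simp add: h_def nsum_add)
      also have "\<dots> = nsum (\<lambda>l3. C * (\<Sum>j=1..m. E j (Y+1) (Z+1) * F' j (l1 @ X # map (\<lambda>k. k+2) l3))) (s # V)"
        by (rule nsum_cong_len) (simp add: ptY l1)
      also have "\<dots> = C * (\<Sum>j\<in>{1..m}. E j (Y+1) (Z+1) * Kf l1 j X)"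
        by (simp add: nsum_cmult nsum_sum Kf_def)
      finally show ?thesis .
    qed
    have alpha: "- (C / 2) = \<alpha>'"
    proof -
      have e: "int (Suc r) * (- 2 * int n + int (Suc r) + 1) = int r * (- 2 * int n + int r + 1) + (- 2 * int N)"
        unfolding intN by (simp add: algebra_simps)
      have pe: "q powi (int r * (- 2 * int n + int r + 1) + (- 2 * int N))
          = q powi (int r * (- 2 * int n + int r + 1)) * q powi (- 2 * int N)"
        by (rule power_int_add) (simp add: q_nz)
      show ?thesis unfolding \<alpha>'_def e C_def \<alpha>_def pe by (simp add: field_simps)
    qed
    define DD where "DD j = gsum (\<lambda>X. gsum (\<lambda>Y. E j X Y) a b) (a+1) (b+1)" for j
    have "Dop i (Gq q (Suc r) n c A) ks
        = nsum (\<lambda>l1. gsum (\<lambda>X. gsum (\<lambda>Y. gsum (\<lambda>Z. h l1 X Y Z) b s) a b) p a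
           + gsum (\<lambda>X. gsum (\<lambda>Y. gsum (\<lambda>Z. h l1 X Y Z) (a-1) s) (b+1) (a-1)) p (b+1)) pre"
      unfolding Dop_def LHS1 LHS2 by (rule nsum_add[symmetric])
    also have "\<dots> = nsum (\<lambda>l1. \<Sum>j=1..m. \<alpha>' * DD j * gsum (Kf l1 j) p (s+2)) pre"
    proof (rule nsum_cong_len)
      fix l1 :: "int list" assume "length l1 = length pre - 1"
      then have l1: "length l1 = i'" using prene ii by simp
      show "gsum (\<lambda>X. gsum (\<lambda>Y. gsum (\<lambda>Z. h l1 X Y Z) b s) a b) p a
           + gsum (\<lambda>X. gsum (\<lambda>Y. gsum (\<lambda>Z. h l1 X Y Z) (a-1) s) (b+1) (a-1)) p (b+1)
          = (\<Sum>j=1..m. \<alpha>' * DD j * gsum (Kf l1 j) p (s+2))"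
        unfolding core[where h="h l1" and E=E and K="Kf l1" and C=C and J="{1..m}", OF hX[OF l1] hY[OF l1]]
        by (simp add: alpha DD_def sum_distrib_left mult_ac)
    qed
    also have "\<dots> = (\<Sum>j=1..m. \<alpha>' * DD j * nsum (\<lambda>l1. gsum (Kf l1 j) p (s+2)) pre)"
      by (simp add: nsum_sum nsum_cmult)
    also have "\<dots> = (\<Sum>j = 1..m. \<alpha>'
            * Dr q (Suc r) (B j) (ks ! (i - 1) + int i) (ks ! i + int i)
            * Gq q (Suc r) (n - 2) (c + 2) (A' j) (take (i - 1) ks @ map (\<lambda>k. k + 2) (drop (i + 1) ks)))"
      unfolding RHS1 using RHS2 ii by (simp add: DD_def a_def b_def)
    finally show "Dop i (Gq q (Suc r) n c A) ks = (\<Sum>j = 1..m. ((-1) ^ Suc r / 2 ^ Suc r) * q powi (int (Suc r) * (- 2 * int n + int (Suc r) + 1))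
            * Dr q (Suc r) (B j) (ks ! (i - 1) + int i) (ks ! i + int i)
            * Gq q (Suc r) (n - 2) (c + 2) (A' j) (take (i - 1) ks @ map (\<lambda>k. k + 2) (drop (i + 1) ks)))"
      unfolding \<alpha>'_def .
  qed
qed

theorem lemma13:
  fixes q :: "'a::field_char_0" and n r m :: nat and c :: int
    and A :: "int list \<Rightarrow> 'a"
    and B :: "nat \<Rightarrow> int \<Rightarrow> int \<Rightarrow> 'a"
    and A' :: "nat \<Rightarrow> int list \<Rightarrow> 'a"
  assumes q_nz: "q \<noteq> 0"
    and r_le: "r \<le> n"
    and hyp: "\<And>i ks. 1 \<le> i \<Longrightarrow> i \<le> n - 1 \<Longrightarrow> length ks = n \<Longrightarrow>
       Dop i A ks = (\<Sum>j = 1..m. B j (ks ! (i - 1) + int i) (ks ! i + int i)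
                       * A' j (take (i - 1) ks @ map (\<lambda>k. k + 2) (drop (i + 1) ks)))"
  shows "\<forall>i ks. 1 \<le> i \<and> i \<le> n - r - 1 \<and> length ks = n - r \<longrightarrow>
       Dop i (Gq q r n c A) ks =
         (\<Sum>j = 1..m. ((-1) ^ r / 2 ^ r) * q powi (int r * (- 2 * int n + int r + 1))
            * Dr q r (B j) (ks ! (i - 1) + int i) (ks ! i + int i)
            * Gq q r (n - 2) (c + 2) (A' j) (take (i - 1) ks @ map (\<lambda>k. k + 2) (drop (i + 1) ks)))"
  using main[OF q_nz hyp r_le] by blast

end
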